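(* Let $\pi$ and $\sigma$ be Knuth equivalent permutations of $[N]$ and let $I$ be a Dyck pattern interval of $\pi$. Then $I$ is also a Dyck pattern interval of $\sigma$. Furthermore, if $\pi\xrightarrow{I}\pi'$ and $\sigma\xrightarrow{I}\sigma'$ are the corresponding edges labeled $I$ in the crystal skeletons, then $\pi'$ and $\sigma'$ are Knuth equivalent.
   Context: Two words are Knuth equivalent if one can be obtained from the other by a sequence of the elementary relations $acb\equiv cab$ for $a\le b<c$ and $bac\equiv bca$ for $a<b\le c$ applied to adjacent letters. For a permutation $\pi$ of $[N]$ and an interval $I=[i,i+2m]\subseteq[N]$ with $m\ge1$, let $\pi|_I$ be the subword of letters in $I$; $I$ is a Dyck pattern interval of $\pi$ if the RSK insertion tableau $P(\pi|_I)$ has bottom row $i,\dots,i+m$ and top row $i+m+1,\dots,i+2m$ (French notation). The edge labeled $I$ out of $\pi$ goes to $\pi'=\mathsf{std}(f_i(w))$, where $w$ is obtained from $\pi$ by replacing the letters $i,\dots,i+m$ by $i$ and $i+m+1,\dots,i+2m$ by $i+1$; here $f_i$ is the crystal operator on words (in the subword of letters $i,i+1$, bracket each $i+1$ with an unbracketed $i$ to its right, parenthesis-style; $f_i$ changes the rightmost unbracketed $i$ into $i+1$), and $\mathsf{std}$ replaces the $a_j$ occurrences of each letter $j$, left to right, by $a_1+\dots+a_{j-1}+1,\dots,a_1+\dots+a_j$. *)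

theory Defs
  imports Main
begin

definition is_perm :: "nat \<Rightarrow> nat list \<Rightarrow> bool" where
  "is_perm N w \<longleftrightarrow> distinct w \<and> set w = {1..N}"

inductive knuth_step :: "nat list \<Rightarrow> nat list \<Rightarrow> bool" where
  K1: "a \<le> b \<Longrightarrow> b < c \<Longrightarrow> knuth_step (u @ [a, c, b] @ v) (u @ [c, a, b] @ v)"
| K2: "a < b \<Longrightarrow> b \<le> c \<Longrightarrow> knuth_step (u @ [b, a, c] @ v) (u @ [b, c, a] @ v)"

definition knuth_equiv :: "nat list \<Rightarrow> nat list \<Rightarrow> bool" where
  "knuth_equiv = (sup knuth_step knuth_step\<inverse>\<inverse>)\<^sup>*\<^sup>*"

fun row_ins :: "nat \<Rightarrow> nat list \<Rightarrow> nat list \<times> nat option" where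
  "row_ins x [] = ([x], None)"
| "row_ins x (y # ys) =
     (if x < y then (x # ys, Some y)
      else (let (r, b) = row_ins x ys in (y # r, b)))"

fun tab_ins :: "nat \<Rightarrow> nat list list \<Rightarrow> nat list list" where
  "tab_ins x [] = [[x]]"
| "tab_ins x (r # rs) =
     (case row_ins x r of
        (r', None) \<Rightarrow> r' # rs
      | (r', Some y) \<Rightarrow> r' # tab_ins y rs)"

text \<open>Insertion tableau P(w): insert the letters of w from left to right.
  The first list is the bottom row.\<close>
definition P_tab :: "nat list \<Rightarrow> nat list list" where
  "P_tab w = fold tab_ins w []"

definition dyck_interval :: "nat \<Rightarrow> nat list \<Rightarrow> nat \<Rightarrow> nat \<Rightarrow> bool" where
  "dyck_interval N \<pi> i m \<longleftrightarrow>
     1 \<le> m \<and> 1 \<le> i \<and> i + 2 * m \<le> N \<and>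
     P_tab (filter (\<lambda>x. x \<in> {i..i + 2 * m}) \<pi>) = [[i..<i + m + 1], [i + m + 1..<i + 2 * m + 1]]"

text \<open>Positions (0-based) of unbracketed letters i, scanning left to right; c counts
  currently open (unbracketed so far) letters i+1, each of which brackets with the
  nearest available i to its right.\<close>
fun unbr_pos :: "nat \<Rightarrow> nat \<Rightarrow> nat \<Rightarrow> nat list \<Rightarrow> nat list" where
  "unbr_pos i c k [] = []"
| "unbr_pos i c k (x # xs) =
     (if x = Suc i then unbr_pos i (Suc c) (Suc k) xs
      else if x = i then
        (if 0 < c then unbr_pos i (c - 1) (Suc k) xs else k # unbr_pos i c (Suc k) xs)
      else unbr_pos i c (Suc k) xs)"

definition crystal_f :: "nat \<Rightarrow> nat list \<Rightarrow> nat list option" where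
  "crystal_f i w =
     (let ps = unbr_pos i 0 0 w in
      if ps = [] then None else Some (w[last ps := Suc i]))"

text \<open>Standardization: the occurrences of each letter j, left to right, are replaced by
  a_1+...+a_{j-1}+1, ..., a_1+...+a_j.\<close>
definition std :: "nat list \<Rightarrow> nat list" where
  "std w = map (\<lambda>k. length (filter (\<lambda>y. y < w ! k) w)
                    + length (filter (\<lambda>y. y = w ! k) (take k w)) + 1) [0..<length w]"

definition collapse :: "nat \<Rightarrow> nat \<Rightarrow> nat list \<Rightarrow> nat list" where
  "collapse i m \<pi> = map (\<lambda>x. if i \<le> x \<and> x \<le> i + m then i
                             else if i + m + 1 \<le> x \<and> x \<le> i + 2 * m then Suc i else x) \<pi>"

definition dyck_edge :: "nat \<Rightarrow> nat list \<Rightarrow> nat \<Rightarrow> nat \<Rightarrow> nat list \<Rightarrow> bool" where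
  "dyck_edge N \<pi> i m \<pi>' \<longleftrightarrow>
     dyck_interval N \<pi> i m \<and>
     (\<exists>v. crystal_f i (collapse i m \<pi>) = Some v \<and> \<pi>' = std v)"

end

theory Submission
  imports Defs
begin


lemma lenfilt_mono: "(\<And>x. P x \<Longrightarrow> Q x) \<Longrightarrow> length (filter P xs) \<le> length (filter Q xs)"
  by (induction xs) auto

lemma lenfilt_disj: "(\<And>x. \<not> (P x \<and> Q x)) \<Longrightarrow>
  length (filter (\<lambda>x. P x \<or> Q x) xs) = length (filter P xs) + length (filter Q xs)"
  by (induction xs) auto

lemma lenfilt_take_le: "length (filter P (take k xs)) \<le> length (filter P xs)"
proof -
  have "xs = take k xs @ drop k xs" by simp
  then have "length (filter P xs) = length (filter P (take k xs)) + length (filter P (drop k xs))"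
    by (metis filter_append length_append)
  then show ?thesis by simp
qed

lemma std_length[simp]: "length (std w) = length w"
  by (simp add: std_def)

lemma std_nth: "k < length w \<Longrightarrow> std w ! k = length (filter (\<lambda>y. y < w ! k) w)
                    + length (filter (\<lambda>y. y = w ! k) (take k w)) + 1"
  by (simp add: std_def)

lemma std_less:
  assumes k: "k < length w" and l: "l < length w"
    and ord: "w ! k < w ! l \<or> (w ! k = w ! l \<and> k < l)"
  shows "std w ! k < std w ! l"
proof -
  have A: "length (filter (\<lambda>y. y = w ! k) (take k w)) + 1 \<le> length (filter (\<lambda>y. y = w ! k) (take (Suc k) w))"
    using k by (simp add: take_Suc_conv_app_nth)
  show ?thesis
  proof (cases "w ! k < w ! l")
    case True
    have "length (filter (\<lambda>y. y < w ! k) w) + length (filter (\<lambda>y. y = w ! k) w)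
        = length (filter (\<lambda>y. y < w ! k \<or> y = w ! k) w)"
      by (rule lenfilt_disj[symmetric]) auto
    also have "\<dots> \<le> length (filter (\<lambda>y. y < w ! l) w)"
      by (rule lenfilt_mono) (use True in auto)
    finally have B: "length (filter (\<lambda>y. y < w ! k) w) + length (filter (\<lambda>y. y = w ! k) w) \<le> length (filter (\<lambda>y. y < w ! l) w)" .
    have C: "length (filter (\<lambda>y. y = w ! k) (take (Suc k) w)) \<le> length (filter (\<lambda>y. y = w ! k) w)"
      by (rule lenfilt_take_le)
    show ?thesis using A B C k l by (simp add: std_nth)
  next
    case False
    then have eq: "w ! k = w ! l" and kl: "k < l" using ord by auto
    have "take (Suc k) w = take (Suc k) (take l w)" using kl by (simp add: min_def)
    then have "length (filter (\<lambda>y. y = w ! k) (take (Suc k) w)) \<le> length (filter (\<lambda>y. y = w ! k) (take l w))"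
      by (metis lenfilt_take_le)
    then show ?thesis using A eq k l by (simp add: std_nth)
  qed
qed

lemma split3: "Suc (Suc n) < length xs \<Longrightarrow>
  xs = take n xs @ [xs ! n, xs ! Suc n, xs ! Suc (Suc n)] @ drop (Suc (Suc (Suc n))) xs"
proof -
  assume a: "Suc (Suc n) < length xs"
  have "drop n xs = xs ! n # xs ! Suc n # xs ! Suc (Suc n) # drop (Suc (Suc (Suc n))) xs"
    using a by (simp add: Cons_nth_drop_Suc)
  then show ?thesis by (metis append_Cons append_Nil append_take_drop_id)
qed

lemma std_swap:
  assumes "p \<noteq> q"
  shows "std (pre @ [q, p] @ suf) = take (length pre) (std (pre @ [p, q] @ suf)) @
           [std (pre @ [p, q] @ suf) ! Suc (length pre), std (pre @ [p, q] @ suf) ! length pre]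
           @ drop (Suc (Suc (length pre))) (std (pre @ [p, q] @ suf))"
  (is "std ?y = ?R")
proof (rule nth_equalityI)
  let ?x = "pre @ [p, q] @ suf"
  let ?n = "length pre"
  show "length (std ?y) = length ?R" by simp
  fix k assume "k < length (std ?y)"
  then have k: "k < length ?x" by simp
  have lt: "length (filter (\<lambda>y. y < v) ?y) = length (filter (\<lambda>y. y < v) ?x)" for v
    by simp
  consider "k < ?n" | "k = ?n" | "k = Suc ?n" | "Suc (Suc ?n) \<le> k" by linarith
  then show "std ?y ! k = ?R ! k"
  proof cases
    case 1
    then show ?thesis using k lt by (simp add: std_nth nth_append)
  next
    case 2
    then show ?thesis using k lt assms by (simp add: std_nth nth_append take_Suc_conv_app_nth)
  next
    case 3
    then show ?thesis using k lt assms by (simp add: std_nth nth_append take_Suc_conv_app_nth)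
  next
    case 4
    then obtain j where j: "k = Suc (Suc ?n) + j" by (metis le_add_diff_inverse)
    have t1: "take k ?y = pre @ [q, p] @ take j suf" using j by simp
    have t2: "take k ?x = pre @ [p, q] @ take j suf" using j by simp
    have "length (filter (\<lambda>y. y = v) (take k ?y)) = length (filter (\<lambda>y. y = v) (take k ?x))" for v
      unfolding t1 t2 by simp
    then show ?thesis using k lt 4 j by (simp add: std_nth nth_append)
  qed
qed

lemma std_step: "knuth_step x y \<Longrightarrow> knuth_step (std x) (std y)"
proof (induction rule: knuth_step.induct)
  case (K1 a b c u v)
  let ?n = "length u"
  let ?S = "std (u @ [a, c] @ (b # v))"
  have ac: "a \<noteq> c" using K1 by simp
  have sw: "std (u @ [c, a] @ (b # v)) = take ?n ?S @ [?S ! Suc ?n, ?S ! ?n] @ drop (Suc (Suc ?n)) ?S"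
    by (rule std_swap) (use ac in auto)
  have e1: "?S ! ?n < ?S ! Suc (Suc ?n)"
    by (rule std_less) (use K1 in \<open>auto simp: nth_append\<close>)
  have e2: "?S ! Suc (Suc ?n) < ?S ! Suc ?n"
    by (rule std_less) (use K1 in \<open>auto simp: nth_append\<close>)
  have dec: "?S = take ?n ?S @ [?S ! ?n, ?S ! Suc ?n, ?S ! Suc (Suc ?n)] @ drop (Suc (Suc (Suc ?n))) ?S"
    by (rule split3) simp
  have d2: "drop (Suc (Suc ?n)) ?S = ?S ! Suc (Suc ?n) # drop (Suc (Suc (Suc ?n))) ?S"
    by (simp add: Cons_nth_drop_Suc)
  have "knuth_step (take ?n ?S @ [?S ! ?n, ?S ! Suc ?n, ?S ! Suc (Suc ?n)] @ drop (Suc (Suc (Suc ?n))) ?S)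
                   (take ?n ?S @ [?S ! Suc ?n, ?S ! ?n, ?S ! Suc (Suc ?n)] @ drop (Suc (Suc (Suc ?n))) ?S)"
    by (rule knuth_step.K1) (use e1 e2 in auto)
  then show ?case using dec sw d2 by simp
next
  case (K2 a b c u v)
  let ?u = "u @ [b]"
  let ?n = "length ?u"
  let ?S = "std (?u @ [a, c] @ v)"
  have ac: "a \<noteq> c" using K2 by simp
  have sw: "std (?u @ [c, a] @ v) = take ?n ?S @ [?S ! Suc ?n, ?S ! ?n] @ drop (Suc (Suc ?n)) ?S"
    by (rule std_swap) (use ac in auto)
  have e1: "?S ! ?n < ?S ! (?n - 1)"
    by (rule std_less) (use K2 in \<open>auto simp: nth_append\<close>)
  have e2: "?S ! (?n - 1) < ?S ! Suc ?n"
    by (rule std_less) (use K2 in \<open>auto simp: nth_append\<close>)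
  have dec: "?S = take (?n - 1) ?S @ [?S ! (?n - 1), ?S ! ?n, ?S ! Suc ?n] @ drop (Suc (Suc ?n)) ?S"
    using split3[of "length u" ?S] by simp
  have t: "take ?n ?S = take (?n - 1) ?S @ [?S ! (?n - 1)]"
    by (simp add: take_Suc_conv_app_nth)
  have "knuth_step (take (?n - 1) ?S @ [?S ! (?n - 1), ?S ! ?n, ?S ! Suc ?n] @ drop (Suc (Suc ?n)) ?S)
                   (take (?n - 1) ?S @ [?S ! (?n - 1), ?S ! Suc ?n, ?S ! ?n] @ drop (Suc (Suc ?n)) ?S)"
    by (rule knuth_step.K2) (use e1 e2 in auto)
  then show ?case using dec sw t by simp
qed




fun cnt :: "nat \<Rightarrow> nat \<Rightarrow> nat list \<Rightarrow> nat" where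
  "cnt i c [] = c"
| "cnt i c (x # xs) = (if x = Suc i then cnt i (Suc c) xs else if x = i then cnt i (c - 1) xs else cnt i c xs)"

lemma cnt_append: "cnt i c (xs @ ys) = cnt i (cnt i c xs) ys"
  by (induction xs arbitrary: c) auto

lemma unbr_append: "unbr_pos i c k (xs @ ys) = unbr_pos i c k xs @ unbr_pos i (cnt i c xs) (k + length xs) ys"
  by (induction xs arbitrary: c k) auto

lemma unbr_shift: "unbr_pos i c k xs = map ((+) k) (unbr_pos i c 0 xs)"
proof (induction xs arbitrary: c k)
  case Nil then show ?case by simp
next
  case (Cons x xs)
  have "unbr_pos i c' (Suc k) xs = map ((+) k) (unbr_pos i c' 1 xs)" for c'
    using Cons.IH[of c' "Suc k"] Cons.IH[of c' 1] by simp
  then show ?case by simp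
qed

lemma unbr_bound: "p \<in> set (unbr_pos i c k xs) \<Longrightarrow> k \<le> p \<and> p < k + length xs"
  by (induction xs arbitrary: c k) (auto split: if_splits, fastforce+)

definition kst :: "nat list \<Rightarrow> nat list \<Rightarrow> bool" where
  "kst p q \<longleftrightarrow> (\<exists>a b c. a \<le> b \<and> b < c \<and> p = [a, c, b] \<and> q = [c, a, b]) \<or>
                         (\<exists>a b c. a < b \<and> b \<le> c \<and> p = [b, a, c] \<and> q = [b, c, a])"

lemma kst_step: "kst p q \<Longrightarrow> knuth_step (pre @ p @ suf) (pre @ q @ suf)"
  unfolding kst_def by (auto intro: knuth_step.intros)

definition lf :: "nat \<Rightarrow> nat \<Rightarrow> nat list \<Rightarrow> nat list" where
  "lf i s t = t[last (unbr_pos i s 0 t) := Suc i]"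

lemma local_K1:
  assumes "a \<le> b" "b < c"
  shows "cnt i s [a, c, b] = cnt i s [c, a, b] \<and>
    (unbr_pos i s 0 [a, c, b] = [] \<longleftrightarrow> unbr_pos i s 0 [c, a, b] = []) \<and>
    (unbr_pos i s 0 [a, c, b] \<noteq> [] \<longrightarrow>
       (lf i s [a, c, b] = lf i s [c, a, b] \<or> kst (lf i s [a, c, b]) (lf i s [c, a, b]) \<or> kst (lf i s [c, a, b]) (lf i s [a, c, b])))"
  using assms unfolding lf_def kst_def
  by (cases s) (auto split: if_splits)

lemma local_K2:
  assumes "a < b" "b \<le> c"
  shows "cnt i s [b, a, c] = cnt i s [b, c, a] \<and>
    (unbr_pos i s 0 [b, a, c] = [] \<longleftrightarrow> unbr_pos i s 0 [b, c, a] = []) \<and>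
    (unbr_pos i s 0 [b, a, c] \<noteq> [] \<longrightarrow>
       (lf i s [b, a, c] = lf i s [b, c, a] \<or> kst (lf i s [b, a, c]) (lf i s [b, c, a]) \<or> kst (lf i s [b, c, a]) (lf i s [b, a, c])))"
  using assms unfolding lf_def kst_def
  by (cases s) (auto split: if_splits)

lemma unbr_split: "unbr_pos i 0 0 (pre @ t @ suf) =
   unbr_pos i 0 0 pre @ map ((+) (length pre)) (unbr_pos i (cnt i 0 pre) 0 t) @
   map ((+) (length pre + length t)) (unbr_pos i (cnt i (cnt i 0 pre) t) 0 suf)"
  by (simp add: unbr_append unbr_shift[of i _ "length pre"] unbr_shift[of i _ "length pre + length t"] cnt_append)

lemma f_lift:
  assumes len: "length t = 3" "length t' = 3"
   and k: "kst t t'"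
   and cn: "cnt i (cnt i 0 pre) t = cnt i (cnt i 0 pre) t'"
   and em: "(unbr_pos i (cnt i 0 pre) 0 t = []) = (unbr_pos i (cnt i 0 pre) 0 t' = [])"
   and lr: "unbr_pos i (cnt i 0 pre) 0 t \<noteq> [] \<Longrightarrow>
       lf i (cnt i 0 pre) t = lf i (cnt i 0 pre) t' \<or> kst (lf i (cnt i 0 pre) t) (lf i (cnt i 0 pre) t') \<or>
       kst (lf i (cnt i 0 pre) t') (lf i (cnt i 0 pre) t)"
  shows "(crystal_f i (pre @ t @ suf) = None \<and> crystal_f i (pre @ t' @ suf) = None) \<or>
    (\<exists>x' y'. crystal_f i (pre @ t @ suf) = Some x' \<and> crystal_f i (pre @ t' @ suf) = Some y' \<and>
       (x' = y' \<or> knuth_step x' y' \<or> knuth_step y' x'))"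
proof -
  define s where "s = cnt i 0 pre"
  define A where "A = unbr_pos i 0 0 pre"
  define B where "B = unbr_pos i s 0 t"
  define B' where "B' = unbr_pos i s 0 t'"
  define C where "C = unbr_pos i (cnt i s t) 0 suf"
  define n where "n = length pre"
  have ux: "unbr_pos i 0 0 (pre @ t @ suf) = A @ map ((+) n) B @ map ((+) (n + 3)) C"
    using len by (simp add: unbr_split A_def B_def C_def s_def n_def)
  have uy: "unbr_pos i 0 0 (pre @ t' @ suf) = A @ map ((+) n) B' @ map ((+) (n + 3)) C"
    using len cn by (simp add: unbr_split A_def B'_def C_def s_def n_def)
  have em': "(B = []) = (B' = [])" using em by (simp add: B_def B'_def s_def)
  show ?thesis
  proof (cases "C = []")
    case False
    let ?p = "last C"
    have "?p \<in> set C" using False by simp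
    then have pl: "?p < length suf" using unbr_bound[of ?p i _ 0 suf] by (simp add: C_def)
    have lx: "last (unbr_pos i 0 0 (pre @ t @ suf)) = n + 3 + ?p" using ux False by (simp add: last_map)
    have ly: "last (unbr_pos i 0 0 (pre @ t' @ suf)) = n + 3 + ?p" using uy False by (simp add: last_map)
    have "(pre @ t @ suf)[n + 3 + ?p := Suc i] = pre @ t @ suf[?p := Suc i]"
      using len by (simp add: list_update_append n_def)
    moreover have "(pre @ t' @ suf)[n + 3 + ?p := Suc i] = pre @ t' @ suf[?p := Suc i]"
      using len by (simp add: list_update_append n_def)
    ultimately show ?thesis using lx ly ux uy False kst_step[OF k]
      by (simp add: crystal_f_def Let_def)
  next
    case C: True
    show ?thesis
    proof (cases "B = []")
      case False
      then have F': "B' \<noteq> []" using em' by simp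
      have "last B \<in> set B" using False by simp
      then have pl: "last B < 3" using unbr_bound[of "last B" i s 0 t] len by (simp add: B_def)
      have "last B' \<in> set B'" using F' by simp
      then have pl': "last B' < 3" using unbr_bound[of "last B'" i s 0 t'] len by (simp add: B'_def)
      have lx: "last (unbr_pos i 0 0 (pre @ t @ suf)) = n + last B" using ux False C by (simp add: last_map)
      have ly: "last (unbr_pos i 0 0 (pre @ t' @ suf)) = n + last B'" using uy F' C by (simp add: last_map)
      have x': "(pre @ t @ suf)[n + last B := Suc i] = pre @ lf i s t @ suf"
        using len pl by (simp add: list_update_append n_def lf_def B_def)
      have y': "(pre @ t' @ suf)[n + last B' := Suc i] = pre @ lf i s t' @ suf"
        using len pl' by (simp add: list_update_append n_def lf_def B'_def)
      have "lf i s t = lf i s t' \<or> kst (lf i s t) (lf i s t') \<or> kst (lf i s t') (lf i s t)"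
        using lr False by (simp add: B_def s_def)
      then have "pre @ lf i s t @ suf = pre @ lf i s t' @ suf \<or>
         knuth_step (pre @ lf i s t @ suf) (pre @ lf i s t' @ suf) \<or>
         knuth_step (pre @ lf i s t' @ suf) (pre @ lf i s t @ suf)"
        using kst_step by blast
      then show ?thesis using lx ly ux uy False F' C x' y'
        by (simp add: crystal_f_def Let_def)
    next
      case B: True
      then have B': "B' = []" using em' by simp
      show ?thesis
      proof (cases "A = []")
        case True
        then show ?thesis using ux uy B B' C by (simp add: crystal_f_def)
      next
        case False
        have "last A \<in> set A" using False by simp
        then have pl: "last A < n" using unbr_bound[of "last A" i 0 0 pre] by (simp add: A_def n_def)
        have lx: "last (unbr_pos i 0 0 (pre @ t @ suf)) = last A" using ux False B C by simp
        have ly: "last (unbr_pos i 0 0 (pre @ t' @ suf)) = last A" using uy False B' C by simp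
        have "(pre @ t @ suf)[last A := Suc i] = pre[last A := Suc i] @ t @ suf"
          using pl by (simp add: list_update_append n_def)
        moreover have "(pre @ t' @ suf)[last A := Suc i] = pre[last A := Suc i] @ t' @ suf"
          using pl by (simp add: list_update_append n_def)
        ultimately show ?thesis using lx ly ux uy False B B' C kst_step[OF k]
          by (simp add: crystal_f_def Let_def)
      qed
    qed
  qed
qed

lemma f_step: "knuth_step x y \<Longrightarrow>
    (crystal_f i x = None \<and> crystal_f i y = None) \<or>
    (\<exists>x' y'. crystal_f i x = Some x' \<and> crystal_f i y = Some y' \<and>
       (x' = y' \<or> knuth_step x' y' \<or> knuth_step y' x'))"
proof (induction rule: knuth_step.induct)
  case (K1 a b c u v)
  show ?case
    by (rule f_lift) (use local_K1[OF K1, of i "cnt i 0 u"] K1 in \<open>auto simp: kst_def\<close>)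
next
  case (K2 a b c u v)
  show ?case
    by (rule f_lift) (use local_K2[OF K2, of i "cnt i 0 u"] K2 in \<open>auto simp: kst_def\<close>)
qed




definition sm :: "nat \<Rightarrow> nat \<Rightarrow> nat \<Rightarrow> bool" where
  "sm i m x \<longleftrightarrow> i \<le> x \<and> x \<le> i + m"
definition lg :: "nat \<Rightarrow> nat \<Rightarrow> nat \<Rightarrow> bool" where
  "lg i m x \<longleftrightarrow> i + m < x \<and> x \<le> i + 2 * m"

fun opn :: "(nat \<Rightarrow> bool) \<Rightarrow> (nat \<Rightarrow> bool) \<Rightarrow> nat \<Rightarrow> nat list \<Rightarrow> nat" where
  "opn S L c [] = c"
| "opn S L c (x # xs) = (if L x then opn S L (Suc c) xs else if S x then opn S L (c - 1) xs else opn S L c xs)"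

lemma opn_append: "opn S L c (xs @ ys) = opn S L (opn S L c xs) ys"
  by (induction xs arbitrary: c) auto

definition good :: "nat \<Rightarrow> nat \<Rightarrow> nat list \<Rightarrow> bool" where
  "good i m w \<longleftrightarrow> sorted_wrt (<) (filter (sm i m) w) \<and> sorted_wrt (<) (filter (lg i m) w)"

definition dyckp :: "nat \<Rightarrow> nat \<Rightarrow> nat list \<Rightarrow> bool" where
  "dyckp i m w \<longleftrightarrow> good i m w \<and> opn (sm i m) (lg i m) 0 w = 0"

lemma opn_le: "opn S L c p \<le> c + length (filter L p)"
proof (induction p arbitrary: c)
  case Nil then show ?case by simp
next
  case (Cons x p)
  show ?case using Cons.IH[of "Suc c"] Cons.IH[of "c - 1"] Cons.IH[of c] by auto
qed

lemma opn_ge: "c + length (filter L p) \<le> opn S L c p + length (filter S p)"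
proof (induction p arbitrary: c)
  case Nil then show ?case by simp
next
  case (Cons x p)
  show ?case using Cons.IH[of "Suc c"] Cons.IH[of "c - 1"] Cons.IH[of c] by auto
qed

lemma row_app: "(\<forall>z\<in>set r. z \<le> x) \<Longrightarrow> row_ins x r = (r @ [x], None)"
  by (induction r) auto

lemma row_bump: "(\<forall>z\<in>set xs. z \<le> x) \<Longrightarrow> x < y \<Longrightarrow> row_ins x (xs @ y # ys) = (xs @ x # ys, Some y)"
  by (induction xs) auto

lemma row_set0: "set (fst (row_ins x r)) \<union> set_option (snd (row_ins x r)) = insert x (set r)"
proof (induction r)
  case Nil then show ?case by simp
next
  case (Cons y ys)
  obtain r0 b0 where rb: "row_ins x ys = (r0, b0)" by (cases "row_ins x ys")
  show ?case using Cons rb by (simp add: insert_commute)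
qed
lemma row_set: "row_ins x r = (r', b) \<Longrightarrow> set r' \<union> set_option b = insert x (set r)"
  using row_set0[of x r] by simp
lemma row_none0: "snd (row_ins x r) = None \<Longrightarrow> \<forall>z\<in>set r. z \<le> x"
proof (induction r)
  case Nil then show ?case by simp
next
  case (Cons y ys)
  obtain r0 b0 where rb: "row_ins x ys = (r0, b0)" by (cases "row_ins x ys")
  show ?case using Cons rb by (simp split: if_splits)
qed
lemma row_none: "row_ins x r = (r', None) \<Longrightarrow> \<forall>z\<in>set r. z \<le> x"
  using row_none0[of x r] by simp

lemma row_x: "x \<in> set (fst (row_ins x r))"
  by (induction r) (auto split: prod.splits)

lemma tab_set: "set (concat (tab_ins x T)) = insert x (set (concat T))"
proof (induction T arbitrary: x)
  case Nil then show ?case by simp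
next
  case (Cons r rs)
  obtain r' b where rb: "row_ins x r = (r', b)" by (cases "row_ins x r")
  show ?case using row_set[OF rb] Cons.IH rb by (cases b) auto
qed

lemma tab_len: "length T \<le> length (tab_ins x T)"
  by (induction T arbitrary: x) (auto split: prod.splits option.splits)

lemma tab_hd: "tab_ins y rs \<noteq> [] \<and> y \<in> set (hd (tab_ins y rs))"
proof (cases rs)
  case Nil then show ?thesis by simp
next
  case (Cons a l)
  obtain r' b where rb: "row_ins y a = (r', b)" by (cases "row_ins y a")
  have "y \<in> set r'" using row_x[of y a] rb by simp
  then show ?thesis using Cons rb by (cases b) simp_all
qed

definition mk2 :: "nat list \<Rightarrow> nat list \<Rightarrow> nat list list" where
  "mk2 r1 r2 = (if r2 = [] then (if r1 = [] then [] else [r1]) else [r1, r2])"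

lemma mk2_ins1: "row_ins x r1 = (r1', None) \<Longrightarrow> tab_ins x (mk2 r1 r2) = mk2 r1' r2"
  using row_x[of x r1] by (auto simp: mk2_def)

lemma mk2_ins2: "row_ins x r1 = (r1', Some y) \<Longrightarrow> row_ins y r2 = (r2', None) \<Longrightarrow>
   tab_ins x (mk2 r1 r2) = mk2 r1' r2'"
  using row_x[of y r2] row_set[of x r1 r1' "Some y"] by (auto simp: mk2_def)

lemma mk2_cons: "r1 \<noteq> [] \<Longrightarrow> mk2 r1 r2 = r1 # (if r2 = [] then [] else [r2])"
  unfolding mk2_def by (cases "r2 = []") simp_all

definition F :: "nat \<Rightarrow> nat \<Rightarrow> nat list \<Rightarrow> nat list list" where
  "F i m p = (let S = filter (sm i m) p; L = filter (lg i m) p;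
      k = length L - opn (sm i m) (lg i m) 0 p in mk2 (S @ drop k L) (take k L))"

lemma P_tab_snoc: "P_tab (p @ [x]) = tab_ins x (P_tab p)"
  by (simp add: P_tab_def)

lemma sm_lg: "sm i m x \<Longrightarrow> lg i m y \<Longrightarrow> x < y"
  by (simp add: sm_def lg_def)

lemma sm_not_lg: "sm i m x \<Longrightarrow> \<not> lg i m x"
  by (simp add: sm_def lg_def)

lemma good_F:
  assumes "distinct p" "\<forall>x\<in>set p. sm i m x \<or> lg i m x" "good i m p"
  shows "P_tab p = F i m p"
  using assms
proof (induction p rule: rev_induct)
  case Nil then show ?case by (simp add: P_tab_def F_def mk2_def)
next
  case (snoc x p)
  have gp: "good i m p" using snoc.prems(3) by (simp add: good_def sorted_wrt_append)
  have IH: "P_tab p = F i m p" using snoc gp by simp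
  define S where "S = filter (sm i m) p"
  define L where "L = filter (lg i m) p"
  define oo where "oo = opn (sm i m) (lg i m) 0 p"
  define k where "k = length L - oo"
  have oL: "oo \<le> length L" using opn_le[of "sm i m" "lg i m" 0 p] by (simp add: oo_def L_def)
  have sL: "sorted_wrt (<) L" and sS: "sorted_wrt (<) S" using gp by (simp_all add: good_def L_def S_def)
  have Fp: "F i m p = mk2 (S @ drop k L) (take k L)" by (simp add: F_def S_def L_def oo_def k_def Let_def)
  have xx: "sm i m x \<or> lg i m x" using snoc.prems by simp
  show ?case
  proof (cases "sm i m x")
    case xs: True
    have nl: "\<not> lg i m x" using xs sm_not_lg by blast
    have Sx: "\<forall>z\<in>set S. z < x" using snoc.prems(3) xs by (simp add: good_def sorted_wrt_append S_def)
    have Lx: "\<forall>z\<in>set L. x < z" using xs sm_lg by (auto simp: L_def)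
    have o': "opn (sm i m) (lg i m) 0 (p @ [x]) = oo - 1" using xs nl by (simp add: opn_append oo_def)
    have Fpx: "F i m (p @ [x]) = (let k' = length L - (oo - 1) in mk2 ((S @ [x]) @ drop k' L) (take k' L))"
      using xs nl o' by (simp add: F_def S_def L_def Let_def)
    show ?thesis
    proof (cases "oo = 0")
      case True
      have k: "k = length L" using True by (simp add: k_def)
      have "tab_ins x (mk2 S L) = mk2 (S @ [x]) L"
        by (rule mk2_ins1) (rule row_app, use Sx in auto)
      then show ?thesis using IH Fp Fpx True k by (simp add: P_tab_snoc)
    next
      case False
      have kl: "k < length L" using False oL by (simp add: k_def)
      have dk: "drop k L = L ! k # drop (Suc k) L" using kl by (simp add: Cons_nth_drop_Suc)
      have tk: "take (Suc k) L = take k L @ [L ! k]" using kl by (simp add: take_Suc_conv_app_nth)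
      have k': "length L - (oo - 1) = Suc k" using False oL by (simp add: k_def)
      have r1: "row_ins x (S @ L ! k # drop (Suc k) L) = (S @ x # drop (Suc k) L, Some (L ! k))"
        by (rule row_bump) (use Sx Lx kl in auto)
      have "sorted_wrt (<) (take k L @ drop k L)" using sL by simp
      then have "\<forall>z\<in>set (take k L). z < L ! k" using dk by (simp add: sorted_wrt_append)
      then have r2: "row_ins (L ! k) (take k L) = (take k L @ [L ! k], None)"
        by (intro row_app) auto
      have "tab_ins x (mk2 (S @ drop k L) (take k L)) = mk2 (S @ x # drop (Suc k) L) (take k L @ [L ! k])"
        by (rule mk2_ins2[OF _ r2]) (use r1 dk in simp)
      then show ?thesis using IH Fp Fpx k' tk by (simp add: P_tab_snoc)
    qed
  next
    case xn: False
    then have xl: "lg i m x" using xx by simp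
    have Sx: "\<forall>z\<in>set S. z < x" using xl sm_lg by (auto simp: S_def)
    have Lx: "\<forall>z\<in>set L. z < x" using snoc.prems(3) xl by (simp add: good_def sorted_wrt_append L_def)
    have o': "opn (sm i m) (lg i m) 0 (p @ [x]) = Suc oo" using xl by (simp add: opn_append oo_def)
    have Fpx: "F i m (p @ [x]) = mk2 (S @ drop k L @ [x]) (take k L)"
      using xl xn o' oL by (simp add: F_def S_def L_def Let_def k_def)
    have "\<forall>z\<in>set (S @ drop k L). z \<le> x"
    proof
      fix z assume "z \<in> set (S @ drop k L)"
      then have "z \<in> set S \<or> z \<in> set L" by (auto dest: in_set_dropD)
      then show "z \<le> x" using Sx Lx by auto
    qed
    then have "tab_ins x (mk2 (S @ drop k L) (take k L)) = mk2 (S @ drop k L @ [x]) (take k L)"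
      using mk2_ins1 row_app by fastforce
    then show ?thesis using IH Fp Fpx by (simp add: P_tab_snoc)
  qed
qed


definition Bad :: "nat \<Rightarrow> nat \<Rightarrow> nat list list \<Rightarrow> bool" where
  "Bad i m T \<longleftrightarrow> 3 \<le> length T \<or> (\<exists>z\<in>set (concat (tl T)). sm i m z) \<or>
     (2 \<le> length T \<and> (\<exists>y\<in>set (T ! 0). lg i m y \<and> (\<exists>z\<in>set (T ! 1). y < z)))"

lemma bad_pres:
  assumes "Bad i m T"
  shows "Bad i m (tab_ins x T)"
proof -
  consider (B1) "3 \<le> length T" | (B2) "\<exists>z\<in>set (concat (tl T)). sm i m z"
    | (B3) "length T = 2" "\<exists>y\<in>set (T ! 0). lg i m y \<and> (\<exists>z\<in>set (T ! 1). y < z)"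
    using assms unfolding Bad_def by force
  then show ?thesis
  proof cases
    case B1
    then show ?thesis using tab_len[of T x] by (simp add: Bad_def)
  next
    case B2
    then obtain r rs where T: "T = r # rs" by (cases T) auto
    obtain r' b where rb: "row_ins x r = (r', b)" by (cases "row_ins x r")
    show ?thesis
    proof (cases b)
      case None
      then show ?thesis using B2 T rb by (simp add: Bad_def)
    next
      case (Some y)
      have "set (concat rs) \<subseteq> set (concat (tab_ins y rs))" using tab_set[of y rs] by auto
      then show ?thesis using B2 T rb Some by (auto simp: Bad_def)
    qed
  next
    case B3
    then obtain r1 r2 where T: "T = [r1, r2]"
      by (cases T; cases "tl T") (auto simp: numeral_2_eq_2 length_Suc_conv)
    obtain y z where y: "y \<in> set r1" "lg i m y" and z: "z \<in> set r2" "y < z" using B3 T by auto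
    obtain r1' b where rb: "row_ins x r1 = (r1', b)" by (cases "row_ins x r1")
    have s1: "set r1' \<union> set_option b = insert x (set r1)" by (rule row_set[OF rb])
    show ?thesis
    proof (cases b)
      case None
      then show ?thesis using T rb s1 y z by (auto simp: Bad_def)
    next
      case (Some w)
      obtain r2' c where rc: "row_ins w r2 = (r2', c)" by (cases "row_ins w r2")
      have s2: "set r2' \<union> set_option c = insert w (set r2)" by (rule row_set[OF rc])
      show ?thesis
      proof (cases c)
        case None
        have "y \<noteq> w" using row_none[of w r2 r2'] rc None z by force
        then have "y \<in> set r1'" using s1 y Some by auto
        moreover have "z \<in> set r2'" using s2 z None by auto
        ultimately show ?thesis using T rb rc Some None y z by (auto simp: Bad_def)
      next
        case (Some c')
        then show ?thesis using T rb rc \<open>b = Some w\<close> by (simp add: Bad_def)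
      qed
    qed
  qed
qed


lemma bad_step:
  assumes dist: "distinct (p @ [x])" and all: "\<forall>z\<in>set (p @ [x]). sm i m z \<or> lg i m z"
    and gp: "good i m p" and ng: "\<not> good i m (p @ [x])"
  shows "Bad i m (tab_ins x (F i m p))"
proof -
  define S where "S = filter (sm i m) p"
  define L where "L = filter (lg i m) p"
  define oo where "oo = opn (sm i m) (lg i m) 0 p"
  define k where "k = length L - oo"
  have Fp: "F i m p = mk2 (S @ drop k L) (take k L)" by (simp add: F_def S_def L_def oo_def k_def Let_def)
  have sL: "sorted_wrt (<) L" and sS: "sorted_wrt (<) S" using gp by (simp_all add: good_def L_def S_def)
  have xnot: "x \<notin> set p" using dist by simp
  show ?thesis
  proof (cases "sm i m x")
    case xs: True
    have nl: "\<not> lg i m x" using xs sm_not_lg by blast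
    have "\<not> sorted_wrt (<) (S @ [x])" using ng nl xs sL by (simp add: good_def S_def L_def)
    then obtain s where s: "s \<in> set S" "\<not> s < x" using sS by (auto simp: sorted_wrt_append)
    have "s \<noteq> x" using s xnot by (auto simp: S_def)
    then have "x < s" using s by simp
    then obtain S1 y S2 where S: "S = S1 @ y # S2" and xy: "x < y" and S1: "\<forall>z\<in>set S1. \<not> x < z"
      using split_list_first_prop[of S "\<lambda>z. x < z"] s by blast
    have "y \<in> set S" using S by simp
    then have ysm: "sm i m y" by (simp add: S_def)
    have rb: "row_ins x (S1 @ y # (S2 @ drop k L)) = (S1 @ x # (S2 @ drop k L), Some y)"
      by (rule row_bump) (use S1 xy in auto)
    have "tab_ins x (F i m p) = (S1 @ x # (S2 @ drop k L)) # tab_ins y (if take k L = [] then [] else [take k L])"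
      using rb by (simp add: Fp S mk2_cons)
    moreover have "y \<in> set (concat (tab_ins y (if take k L = [] then [] else [take k L])))"
      using tab_set[of y "if take k L = [] then [] else [take k L]"] by blast
    ultimately show ?thesis using ysm by (auto simp: Bad_def)
  next
    case xn: False
    then have xl: "lg i m x" using all by simp
    have Sx: "\<forall>z\<in>set S. z < x" using xl sm_lg by (auto simp: S_def)
    have "\<not> sorted_wrt (<) (L @ [x])" using ng xn xl sS by (simp add: good_def S_def L_def)
    then obtain l where l: "l \<in> set L" "\<not> l < x" using sL by (auto simp: sorted_wrt_append)
    have "l \<noteq> x" using l xnot by (auto simp: L_def)
    then have xl2: "x < l" using l by simp
    show ?thesis
    proof (cases "\<exists>l\<in>set (drop k L). x < l")
      case True
      then obtain U1 y U2 where U: "drop k L = U1 @ y # U2" and xy: "x < y" and U1: "\<forall>z\<in>set U1. \<not> x < z"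
        using split_list_first_prop[of "drop k L" "\<lambda>z. x < z"] by blast
      have rb: "row_ins x ((S @ U1) @ y # U2) = ((S @ U1) @ x # U2, Some y)"
        by (rule row_bump) (use U1 xy Sx in auto)
      have T: "tab_ins x (F i m p) = ((S @ U1) @ x # U2) # tab_ins y (if take k L = [] then [] else [take k L])"
        using rb by (simp add: Fp U mk2_cons)
      have "tab_ins y (if take k L = [] then [] else [take k L]) \<noteq> [] \<and>
            y \<in> set (hd (tab_ins y (if take k L = [] then [] else [take k L])))" by (rule tab_hd)
      then show ?thesis using T xl xy
        by (cases "tab_ins y (if take k L = [] then [] else [take k L])") (auto simp: Bad_def)
    next
      case False
      have "l \<in> set (take k L)"
      proof -
        have "l \<in> set (take k L @ drop k L)" using l by simp
        then have "l \<in> set (take k L) \<or> l \<in> set (drop k L)" by (simp only: set_append Un_iff)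
        then show ?thesis using False xl2 by blast
      qed
      then have tne: "take k L \<noteq> []" by (metis empty_iff list.set(1))
      have "\<forall>z\<in>set (S @ drop k L). z \<le> x" using False Sx by auto
      then have ra: "row_ins x (S @ drop k L) = ((S @ drop k L) @ [x], None)" by (rule row_app)
      have "tab_ins x (F i m p) = mk2 ((S @ drop k L) @ [x]) (take k L)"
        unfolding Fp by (rule mk2_ins1[OF ra])
      then have "tab_ins x (F i m p) = [(S @ drop k L) @ [x], take k L]" using tne by (simp add: mk2_def)
      then show ?thesis using xl xl2 \<open>l \<in> set (take k L)\<close> by (auto simp: Bad_def)
    qed
  qed
qed

lemma good_or_bad:
  assumes "distinct w" "\<forall>z\<in>set w. sm i m z \<or> lg i m z"
  shows "good i m w \<or> Bad i m (P_tab w)"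
  using assms
proof (induction w rule: rev_induct)
  case Nil then show ?case by (simp add: good_def)
next
  case (snoc x p)
  then have IH: "good i m p \<or> Bad i m (P_tab p)" by simp
  show ?case
  proof (cases "good i m p")
    case True
    have "P_tab p = F i m p" using good_F[of p i m] True snoc.prems by simp
    then show ?thesis using bad_step[OF snoc.prems True] by (auto simp: P_tab_snoc)
  next
    case False
    then show ?thesis using IH bad_pres by (auto simp: P_tab_snoc)
  qed
qed


lemma opn_filter: "(\<And>x. S x \<or> L x \<Longrightarrow> Q x) \<Longrightarrow> opn S L c (filter Q xs) = opn S L c xs"
  by (induction xs arbitrary: c) auto

lemma strict_eq:
  fixes xs ys :: "nat list"
  assumes "sorted_wrt (<) xs" "sorted_wrt (<) ys" "set xs = set ys" shows "xs = ys"
proof -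
  have x: "sorted xs" "distinct xs" using assms(1) unfolding strict_sorted_iff by blast+
  have y: "sorted ys" "distinct ys" using assms(2) unfolding strict_sorted_iff by blast+
  have a: "sorted_list_of_set (set xs) = xs" by (rule sorted_list_of_set.idem_if_sorted_distinct[OF x])
  have b: "sorted_list_of_set (set ys) = ys" by (rule sorted_list_of_set.idem_if_sorted_distinct[OF y])
  show ?thesis using a b assms(3) by metis
qed

lemma upt_sorted: "sorted_wrt (<) [a..<b]"
  by (induction b) (auto simp: sorted_wrt_append)

lemma mk2_eq2: "mk2 a b = [c, d] \<Longrightarrow> a = c \<and> b = d"
  by (simp add: mk2_def split: if_splits)

declare upt_Suc[simp del]

lemma dyck_iff:
  assumes perm: "is_perm N \<pi>" and b: "1 \<le> m" "1 \<le> i" "i + 2 * m \<le> N"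
  shows "dyck_interval N \<pi> i m \<longleftrightarrow> dyckp i m \<pi>"
proof -
  define Q where "Q = (\<lambda>x::nat. x \<in> {i..i + 2 * m})"
  define w where "w = filter Q \<pi>"
  have dw: "distinct w" using perm by (simp add: w_def is_perm_def)
  have sw: "set w = {i..i + 2 * m}" using perm b by (auto simp: w_def Q_def is_perm_def)
  have all: "\<forall>z\<in>set w. sm i m z \<or> lg i m z" using sw by (auto simp: sm_def lg_def)
  have fs: "filter (sm i m) w = filter (sm i m) \<pi>" unfolding w_def filter_filter
    by (rule filter_cong) (auto simp: Q_def sm_def)
  have fl: "filter (lg i m) w = filter (lg i m) \<pi>" unfolding w_def filter_filter
    by (rule filter_cong) (auto simp: Q_def lg_def)
  have fo: "opn (sm i m) (lg i m) 0 w = opn (sm i m) (lg i m) 0 \<pi>" unfolding w_def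
    by (rule opn_filter) (auto simp: Q_def sm_def lg_def)
  have gw: "good i m w = good i m \<pi>" using fs fl by (simp add: good_def)
  define S where "S = filter (sm i m) w"
  define L where "L = filter (lg i m) w"
  define oo where "oo = opn (sm i m) (lg i m) 0 w"
  define k where "k = length L - oo"
  have Fw: "F i m w = mk2 (S @ drop k L) (take k L)" by (simp add: F_def S_def L_def oo_def k_def Let_def)
  have setS: "set S = {i..<i + m + 1}" using sw by (auto simp: S_def sm_def)
  have setL: "set L = {i + m + 1..<i + 2 * m + 1}" using sw by (auto simp: L_def lg_def)
  define T where "T = [[i..<i + m + 1], [i + m + 1..<i + 2 * m + 1]]"
  have dI: "dyck_interval N \<pi> i m \<longleftrightarrow> P_tab w = T"
    using b by (simp add: dyck_interval_def w_def Q_def T_def)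
  have SL: "S = [i..<i + m + 1] \<and> L = [i + m + 1..<i + 2 * m + 1]" if g: "good i m w"
  proof
    show "S = [i..<i + m + 1]"
    proof (rule strict_eq)
      show "sorted_wrt (<) S" using g by (simp add: good_def S_def)
      show "sorted_wrt (<) [i..<i + m + 1]" by (rule upt_sorted)
      show "set S = set [i..<i + m + 1]" using setS by (simp only: set_upt)
    qed
    show "L = [i + m + 1..<i + 2 * m + 1]"
    proof (rule strict_eq)
      show "sorted_wrt (<) L" using g by (simp add: good_def L_def)
      show "sorted_wrt (<) [i + m + 1..<i + 2 * m + 1]" by (rule upt_sorted)
      show "set L = set [i + m + 1..<i + 2 * m + 1]" using setL by (simp only: set_upt)
    qed
  qed
  show ?thesis
  proof
    assume "dyck_interval N \<pi> i m"
    then have PT: "P_tab w = T" using dI by simp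
    have nb: "\<not> Bad i m T"
    proof
      assume "Bad i m T"
      moreover have "\<not> (\<exists>z\<in>set (concat (tl T)). sm i m z)" by (auto simp: T_def sm_def)
      moreover have "\<not> (\<exists>y\<in>set (T ! 0). lg i m y)" by (auto simp: T_def lg_def)
      moreover have "length T = 2" by (simp add: T_def)
      ultimately show False unfolding Bad_def by auto
    qed
    have g: "good i m w" using good_or_bad[OF dw all] PT nb by auto
    have "F i m w = T" using good_F[OF dw all g] PT by simp
    then have "mk2 (S @ drop k L) (take k L) = T" using Fw by simp
    then have e1: "S @ drop k L = [i..<i + m + 1]" unfolding T_def by (rule mk2_eq2[THEN conjunct1])
    have "drop k L = []" using e1 SL[OF g] by simp
    moreover have "length L = m" using SL[OF g] by simp
    ultimately have "oo = 0" using b by (simp add: k_def)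
    then show "dyckp i m \<pi>" using g gw fo by (simp add: dyckp_def oo_def)
  next
    assume "dyckp i m \<pi>"
    then have g: "good i m w" and o0: "oo = 0" using gw fo by (simp_all add: dyckp_def oo_def)
    have "P_tab w = F i m w" using good_F[OF dw all g] .
    also have "\<dots> = mk2 S L" using Fw o0 by (simp add: k_def)
    also have "\<dots> = [S, L]" using SL[OF g] b by (simp add: mk2_def)
    also have "\<dots> = T" using SL[OF g] by (simp add: T_def)
    finally show "dyck_interval N \<pi> i m" using dI by simp
  qed
qed

declare upt_Suc[simp]


lemma sorted_mid:
  assumes "filter S t' = filter S t \<or> (\<not> sorted_wrt (<) (filter S t) \<and> \<not> sorted_wrt (<) (filter S t'))"
  shows "sorted_wrt (<) (filter S (pre @ t @ suf)) = sorted_wrt (<) (filter S (pre @ t' @ suf))"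
  using assms
proof
  assume "filter S t' = filter S t"
  then show ?thesis by (simp only: filter_append)
qed (auto simp: sorted_wrt_append)

lemma local_good_K1:
  assumes "a \<le> b" "b < c"
  shows "(filter (sm i m) [c, a, b] = filter (sm i m) [a, c, b] \<or>
           (\<not> sorted_wrt (<) (filter (sm i m) [a, c, b]) \<and> \<not> sorted_wrt (<) (filter (sm i m) [c, a, b])))
    \<and> (filter (lg i m) [c, a, b] = filter (lg i m) [a, c, b] \<or>
           (\<not> sorted_wrt (<) (filter (lg i m) [a, c, b]) \<and> \<not> sorted_wrt (<) (filter (lg i m) [c, a, b])))
    \<and> (sorted_wrt (<) (filter (sm i m) [a, c, b]) \<longrightarrow> sorted_wrt (<) (filter (lg i m) [a, c, b]) \<longrightarrow>
         opn (sm i m) (lg i m) s [a, c, b] = opn (sm i m) (lg i m) s [c, a, b])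
    \<and> (sorted_wrt (<) (filter (sm i m) [a, c, b]) \<longrightarrow> sorted_wrt (<) (filter (lg i m) [a, c, b]) \<longrightarrow>
         (let f = (\<lambda>x. if i \<le> x \<and> x \<le> i + m then i else if i + m + 1 \<le> x \<and> x \<le> i + 2 * m then Suc i else x)
          in f a \<le> f b \<and> f b < f c))"
  using assms unfolding sm_def lg_def Let_def by (auto split: if_splits)

lemma local_good_K2:
  assumes "a < b" "b \<le> c"
  shows "(filter (sm i m) [b, c, a] = filter (sm i m) [b, a, c] \<or>
           (\<not> sorted_wrt (<) (filter (sm i m) [b, a, c]) \<and> \<not> sorted_wrt (<) (filter (sm i m) [b, c, a])))
    \<and> (filter (lg i m) [b, c, a] = filter (lg i m) [b, a, c] \<or>
           (\<not> sorted_wrt (<) (filter (lg i m) [b, a, c]) \<and> \<not> sorted_wrt (<) (filter (lg i m) [b, c, a])))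
    \<and> (sorted_wrt (<) (filter (sm i m) [b, a, c]) \<longrightarrow> sorted_wrt (<) (filter (lg i m) [b, a, c]) \<longrightarrow>
         opn (sm i m) (lg i m) s [b, a, c] = opn (sm i m) (lg i m) s [b, c, a])
    \<and> (sorted_wrt (<) (filter (sm i m) [b, a, c]) \<longrightarrow> sorted_wrt (<) (filter (lg i m) [b, a, c]) \<longrightarrow>
         (let f = (\<lambda>x. if i \<le> x \<and> x \<le> i + m then i else if i + m + 1 \<le> x \<and> x \<le> i + 2 * m then Suc i else x)
          in f a < f b \<and> f b \<le> f c))"
  using assms unfolding sm_def lg_def Let_def by (auto split: if_splits)

lemma good_mid: "good i m (pre @ t @ suf) \<Longrightarrow> sorted_wrt (<) (filter (sm i m) t) \<and> sorted_wrt (<) (filter (lg i m) t)"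
  by (simp add: good_def sorted_wrt_append)

lemma good_step: "knuth_step u v \<Longrightarrow> good i m u = good i m v \<and>
   (good i m u \<longrightarrow> opn (sm i m) (lg i m) 0 u = opn (sm i m) (lg i m) 0 v \<and>
      knuth_step (collapse i m u) (collapse i m v))"
proof (induction rule: knuth_step.induct)
  case (K1 a b c u v)
  note L = local_good_K1[OF K1, of i m "opn (sm i m) (lg i m) 0 u"]
  have g: "good i m (u @ [a, c, b] @ v) = good i m (u @ [c, a, b] @ v)"
    unfolding good_def using sorted_mid[of "sm i m" "[c,a,b]" "[a,c,b]" u v] sorted_mid[of "lg i m" "[c,a,b]" "[a,c,b]" u v] L
    by blast
  show ?case
  proof (intro conjI impI g)
    assume gd: "good i m (u @ [a, c, b] @ v)"
    note gm = good_mid[OF gd]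
    show "opn (sm i m) (lg i m) 0 (u @ [a, c, b] @ v) = opn (sm i m) (lg i m) 0 (u @ [c, a, b] @ v)"
      using L gm by (simp only: opn_append)
    show "knuth_step (collapse i m (u @ [a, c, b] @ v)) (collapse i m (u @ [c, a, b] @ v))"
      using L gm unfolding collapse_def Let_def by (auto intro: knuth_step.K1[simplified])
  qed
next
  case (K2 a b c u v)
  note L = local_good_K2[OF K2, of i m "opn (sm i m) (lg i m) 0 u"]
  have g: "good i m (u @ [b, a, c] @ v) = good i m (u @ [b, c, a] @ v)"
    unfolding good_def using sorted_mid[of "sm i m" "[b,c,a]" "[b,a,c]" u v] sorted_mid[of "lg i m" "[b,c,a]" "[b,a,c]" u v] L
    by blast
  show ?case
  proof (intro conjI impI g)
    assume gd: "good i m (u @ [b, a, c] @ v)"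
    note gm = good_mid[OF gd]
    show "opn (sm i m) (lg i m) 0 (u @ [b, a, c] @ v) = opn (sm i m) (lg i m) 0 (u @ [b, c, a] @ v)"
      using L gm by (simp only: opn_append)
    show "knuth_step (collapse i m (u @ [b, a, c] @ v)) (collapse i m (u @ [b, c, a] @ v))"
      using L gm unfolding collapse_def Let_def by (auto intro: knuth_step.K2[simplified])
  qed
qed



lemma keq_step: "knuth_step x y \<Longrightarrow> knuth_equiv x y"
  unfolding knuth_equiv_def by (rule r_into_rtranclp) simp

lemma keq_step': "knuth_step y x \<Longrightarrow> knuth_equiv x y"
  unfolding knuth_equiv_def by (rule r_into_rtranclp) simp

lemma keq_trans: "knuth_equiv x y \<Longrightarrow> knuth_equiv y z \<Longrightarrow> knuth_equiv x z"
  unfolding knuth_equiv_def by (rule rtranclp_trans)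

lemma chain_dyck:
  assumes "knuth_equiv p q" "dyckp i m p"
  shows "dyckp i m q \<and> knuth_equiv (collapse i m p) (collapse i m q)"
  using assms(1) unfolding knuth_equiv_def
proof (induction rule: rtranclp_induct)
  case base
  then show ?case using assms(2) by (simp add: knuth_equiv_def)
next
  case (step y z)
  have dy: "dyckp i m y" using step.IH by blast
  have cy: "knuth_equiv (collapse i m p) (collapse i m y)" unfolding knuth_equiv_def using step.IH by blast
  from step.hyps(2) have "knuth_step y z \<or> knuth_step z y" by simp
  then show ?case
  proof
    assume k: "knuth_step y z"
    note G = good_step[OF k, of i m]
    have dz: "dyckp i m z" using dy G by (simp add: dyckp_def)
    have "knuth_equiv (collapse i m y) (collapse i m z)" using G dy by (simp add: dyckp_def keq_step)
    then show ?thesis using dz cy keq_trans unfolding knuth_equiv_def by blast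
  next
    assume k: "knuth_step z y"
    note G = good_step[OF k, of i m]
    have dz: "dyckp i m z" using dy G by (auto simp: dyckp_def)
    have "knuth_equiv (collapse i m y) (collapse i m z)" using G dz by (simp add: dyckp_def keq_step')
    then show ?thesis using dz cy keq_trans unfolding knuth_equiv_def by blast
  qed
qed

lemma chain_f:
  assumes "knuth_equiv x y"
  shows "(crystal_f i x = None \<longleftrightarrow> crystal_f i y = None) \<and>
    (\<forall>x' y'. crystal_f i x = Some x' \<longrightarrow> crystal_f i y = Some y' \<longrightarrow> knuth_equiv x' y')"
  using assms[unfolded knuth_equiv_def]
proof (induction rule: rtranclp_induct)
  case base
  then show ?case by (simp add: knuth_equiv_def)
next
  case (step y z)
  have IH1: "crystal_f i x = None \<longleftrightarrow> crystal_f i y = None"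
    and IH2: "\<And>x' y'. crystal_f i x = Some x' \<Longrightarrow> crystal_f i y = Some y' \<Longrightarrow> knuth_equiv x' y'"
    using step.IH by blast+
  have "(crystal_f i y = None \<and> crystal_f i z = None) \<or>
    (\<exists>y' z'. crystal_f i y = Some y' \<and> crystal_f i z = Some z' \<and> knuth_equiv y' z')"
  proof -
    from step.hyps(2) have "knuth_step y z \<or> knuth_step z y" by simp
    then show ?thesis
    proof
      assume "knuth_step y z"
      from f_step[OF this, of i] show ?thesis
        using keq_step keq_step' by (metis knuth_equiv_def rtranclp.rtrancl_refl)
    next
      assume "knuth_step z y"
      from f_step[OF this, of i] show ?thesis
        using keq_step keq_step' by (metis knuth_equiv_def rtranclp.rtrancl_refl)
    qed
  qed
  then show ?case
  proof
    assume "crystal_f i y = None \<and> crystal_f i z = None"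
    then show ?thesis using IH1 by simp
  next
    assume "\<exists>y' z'. crystal_f i y = Some y' \<and> crystal_f i z = Some z' \<and> knuth_equiv y' z'"
    then obtain y' z' where yz: "crystal_f i y = Some y'" "crystal_f i z = Some z'" "knuth_equiv y' z'" by blast
    show ?thesis
    proof (intro conjI allI impI)
      show "(crystal_f i x = None) = (crystal_f i z = None)" using IH1 yz by simp
      fix x' z'' assume "crystal_f i x = Some x'" "crystal_f i z = Some z''"
      then show "knuth_equiv x' z''" using IH2[of x' y'] yz keq_trans by auto
    qed
  qed
qed

lemma chain_std:
  assumes "knuth_equiv x y"
  shows "knuth_equiv (std x) (std y)"
  using assms unfolding knuth_equiv_def
proof (induction rule: rtranclp_induct)
  case base
  then show ?case by simp
next
  case (step y z)
  from step.hyps(2) have "knuth_step y z \<or> knuth_step z y" by simp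
  then have "knuth_equiv (std y) (std z)" using std_step keq_step keq_step' by blast
  then show ?case using step.IH keq_trans unfolding knuth_equiv_def by blast
qed

theorem proposition4p5:
  fixes N i m :: nat and \<pi> \<sigma> :: "nat list"
  assumes "is_perm N \<pi>" and "is_perm N \<sigma>"
    and "knuth_equiv \<pi> \<sigma>"
    and "dyck_interval N \<pi> i m"
  shows "dyck_interval N \<sigma> i m \<and>
         (\<forall>\<pi>' \<sigma>'. dyck_edge N \<pi> i m \<pi>' \<longrightarrow> dyck_edge N \<sigma> i m \<sigma>' \<longrightarrow> knuth_equiv \<pi>' \<sigma>')"
proof -
  have b: "1 \<le> m" "1 \<le> i" "i + 2 * m \<le> N" using assms(4) by (simp_all add: dyck_interval_def)
  have dp: "dyckp i m \<pi>" using dyck_iff[OF assms(1) b] assms(4) by simp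
  have C: "dyckp i m \<sigma> \<and> knuth_equiv (collapse i m \<pi>) (collapse i m \<sigma>)" by (rule chain_dyck[OF assms(3) dp])
  have ds: "dyck_interval N \<sigma> i m" using dyck_iff[OF assms(2) b] C by simp
  show ?thesis
  proof (intro conjI allI impI ds)
    fix \<pi>' \<sigma>' assume e1: "dyck_edge N \<pi> i m \<pi>'" and e2: "dyck_edge N \<sigma> i m \<sigma>'"
    obtain v where v: "crystal_f i (collapse i m \<pi>) = Some v" "\<pi>' = std v" using e1 by (auto simp: dyck_edge_def)
    obtain u where u: "crystal_f i (collapse i m \<sigma>) = Some u" "\<sigma>' = std u" using e2 by (auto simp: dyck_edge_def)
    have "knuth_equiv v u" using chain_f[OF conjunct2[OF C], of i] v u by blast
    then show "knuth_equiv \<pi>' \<sigma>'" using chain_std v u by simp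
  qed
qed

end
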